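(* Let $\mathcal{S}\subset\mathbb{R}^n$ be a measurable set with finite positive volume $V(\mathcal{S})$ and normalized second moment $$G(\mathcal{S})=\frac{1}{nV(\mathcal{S})}\frac{\int_{\mathcal{S}}\|\mathbf{x}\|^2d\mathbf{x}}{V(\mathcal{S})^{\frac{2}{n}}}.$$ Let $r_{\mathrm{eff}}$ be defined by $V(\mathcal{S})=V_n r_{\mathrm{eff}}^n$, where $V_n$ is the volume of the $n$-dimensional unit ball. For any $0<\epsilon<1$ define $$r_{\epsilon}=\sqrt{\frac{2\pi e G(\mathcal{S})-\frac{n}{n+2}(1-\epsilon)^{1+\frac{2}{n}}}{\epsilon}}\; r_{\mathrm{eff}}.$$ If $\mathbf{U}$ is uniformly distributed on $\mathcal{S}$, then $$\Pr\left(\mathbf{U}\notin \mathcal{B}(\mathbf{0},r_{\epsilon})\right)\leq\epsilon,$$ where $\mathcal{B}(\mathbf{0},r)$ is the closed Euclidean ball of radius $r$ centred at the origin. *)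

theory Defs
  imports "HOL-Analysis.Analysis" "HOL-Probability.Probability"
begin

definition unit_ball_vol :: "'n::finite itself \<Rightarrow> real" where
  "unit_ball_vol _ = measure lebesgue (ball (0 :: real ^ 'n) 1)"

definition nsm :: "(real ^ 'n::finite) set \<Rightarrow> real" where
  "nsm S = (let n = real CARD('n); V = measure lebesgue S in
     (1 / (n * V)) * (LINT x:S|lebesgue. (norm x)^2) / (V powr (2 / n)))"

definition r_eff :: "(real ^ 'n::finite) set \<Rightarrow> real" where
  "r_eff S = (measure lebesgue S / unit_ball_vol TYPE('n)) powr (1 / real CARD('n))"

definition r_eps :: "(real ^ 'n::finite) set \<Rightarrow> real \<Rightarrow> real" where
  "r_eps S \<epsilon> = (let n = real CARD('n) in
     sqrt ((2 * pi * exp 1 * nsm S - n / (n + 2) * (1 - \<epsilon>) powr (1 + 2 / n)) / \<epsilon>) * r_eff S)"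

end

theory Submission
  imports Defs
begin


lemma exp_neg_lim: "((\<lambda>t::real. c * exp (-t)) \<longlongrightarrow> 0) at_top"
proof -
  have "((\<lambda>t::real. exp (-t)) \<longlongrightarrow> 0) at_top"
    using filterlim_compose[OF exp_at_bot filterlim_uminus_at_bot_at_top] by (simp add: o_def)
  from tendsto_mult[OF tendsto_const this, of c] show ?thesis by simp
qed

lemma FTC_exp:
  assumes "c \<ge> 0"
  shows "(\<integral>\<^sup>+t. ennreal (c * exp (-t)) * indicator {y..} t \<partial>lborel) = ennreal (c * exp (-y))"
proof -
  have "(\<integral>\<^sup>+t. ennreal (c * exp (-t)) * indicator {y..} t \<partial>lborel) = ennreal (0 - (- c * exp (-y)))"
    apply (rule nn_integral_FTC_atLeast[where F="\<lambda>t. - c * exp (-t)"])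
    apply simp
    apply (auto intro!: derivative_eq_intros simp: assms)[2]
    using exp_neg_lim[of "-c"] apply simp
    done
  then show ?thesis by simp
qed

lemma gamma_lower:
  fixes x :: real assumes x: "x > 0"
  shows "x powr x * exp (-x) < Gamma (x+1)"
proof -
  have G: "Gamma (x+1) = (\<integral>\<^sup>+t. ennreal (indicator {0..} t * t powr x / exp t) \<partial>lborel)"
    using Gamma_conv_nn_integral_real[of "x+1"] x by simp
  define a where "a = (x/2) powr x"
  define b where "b = x powr x - a"
  have a0: "a > 0" using x by (simp add: a_def)
  have b0: "b > 0" using x unfolding b_def a_def by (intro diff_gt_0_iff_gt[THEN iffD2] powr_less_mono2) auto
  have "ennreal (a * exp (-(x/2))) + ennreal (b * exp (-x)) =
     (\<integral>\<^sup>+t. ennreal (a * exp (-t)) * indicator {x/2..} t \<partial>lborel) + (\<integral>\<^sup>+t. ennreal (b * exp (-t)) * indicator {x..} t \<partial>lborel)"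
    using FTC_exp[of a "x/2"] FTC_exp[of b x] a0 b0 by simp
  also have "\<dots> = (\<integral>\<^sup>+t. ennreal (a * exp (-t)) * indicator {x/2..} t + ennreal (b * exp (-t)) * indicator {x..} t \<partial>lborel)"
    by (rule nn_integral_add[symmetric]) auto
  also have "\<dots> \<le> (\<integral>\<^sup>+t. ennreal (indicator {0..} t * t powr x / exp t) \<partial>lborel)"
  proof (rule nn_integral_mono)
    fix t :: real
    show "ennreal (a * exp (-t)) * indicator {x/2..} t + ennreal (b * exp (-t)) * indicator {x..} t
          \<le> ennreal (indicator {0..} t * t powr x / exp t)"
    proof (cases "t < x/2")
      case True then show ?thesis using x by (simp add: indicator_def)
    next
      case False
      hence t: "t \<ge> x/2" by simp
      have ta: "a \<le> t powr x" unfolding a_def using x t by (intro powr_mono2) auto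
      show ?thesis
      proof (cases "t < x")
        case True
        then have "ennreal (a * exp (-t)) * indicator {x/2..} t + ennreal (b * exp (-t)) * indicator {x..} t
           = ennreal (a * exp (-t))" using t by (simp add: indicator_def)
        also have "\<dots> \<le> ennreal (indicator {0..} t * t powr x / exp t)"
          using t x ta by (intro ennreal_leI) (simp add: exp_minus field_simps)
        finally show ?thesis .
      next
        case False
        have tb: "a + b \<le> t powr x" unfolding b_def using x False by (simp add: powr_mono2)
        have "ennreal (a * exp (-t)) * indicator {x/2..} t + ennreal (b * exp (-t)) * indicator {x..} t
           = ennreal ((a + b) * exp (-t))" using t False a0 b0
          by (simp add: indicator_def ennreal_plus[symmetric] distrib_right del: ennreal_plus)
        also have "\<dots> \<le> ennreal (indicator {0..} t * t powr x / exp t)"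
        proof (intro ennreal_leI)
          have "(a + b) * exp (-t) \<le> t powr x * exp (-t)" by (rule mult_right_mono[OF tb]) simp
          then show "(a + b) * exp (-t) \<le> indicator {0..} t * t powr x / exp t"
          proof -
            have "indicator {0..} t * t powr x / exp t = t powr x * exp (-t)"
            proof -
              have e: "exp (-t) = 1 / exp t" by (simp add: exp_minus inverse_eq_divide)
              show ?thesis using t x unfolding e by (simp add: indicator_def)
            qed
            with \<open>(a + b) * exp (-t) \<le> t powr x * exp (-t)\<close> show ?thesis by simp
          qed
        qed
        finally show ?thesis .
      qed
    qed
  qed
  also have "\<dots> = ennreal (Gamma (x+1))" using G by simp
  finally have fin: "ennreal (a * exp (-(x/2))) + ennreal (b * exp (-x)) \<le> ennreal (Gamma (x+1))" .
  have gp: "Gamma (x+1) > 0" using x by simp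
  from fin have "ennreal (a * exp (-(x/2)) + b * exp (-x)) \<le> ennreal (Gamma (x+1))"
    using a0 b0 by (simp add: ennreal_plus[symmetric] del: ennreal_plus)
  then have "a * exp (-(x/2)) + b * exp (-x) \<le> Gamma (x+1)" using gp by (simp add: ennreal_le_iff)
  moreover have "exp (-x) < exp (-(x/2))" using x by simp
  then have "a * exp (-x) < a * exp (-(x/2))" using a0 by simp
  ultimately show ?thesis unfolding b_def by (simp add: algebra_simps)
qed




lemma ubv_bound:
  fixes N :: nat assumes N: "N \<ge> 1"
  shows "real N * Ball_Volume.unit_ball_vol (real N) powr (2 / real N) < 2 * pi * exp 1"
proof -
  define x where "x = real N / 2"
  have x: "x > 0" using N by (simp add: x_def)
  have g: "x powr x * exp (-x) < Gamma (x+1)" by (rule gamma_lower[OF x])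
  have g0: "0 < x powr x * exp (-x)" using x by simp
  have "(x powr x * exp (-x)) powr (1/x) < Gamma (x+1) powr (1/x)"
    using g g0 x by (intro powr_less_mono2) auto
  moreover have "(x powr x * exp (-x)) powr (1/x) = x * exp (-1)"
  proof -
    have 1: "(x powr x) powr (1/x) = x" using x by (simp add: powr_powr)
    have 2: "exp (-x) powr (1/x) = exp (-1)" using x by (simp add: powr_def)
    show ?thesis using x by (simp add: powr_mult 1 2)
  qed
  ultimately have gl: "x * exp (-1) < Gamma (x+1) powr (1/x)" by simp
  have Gp: "Gamma (x+1) > 0" using x by simp
  have "Ball_Volume.unit_ball_vol (real N) powr (2 / real N) = (pi powr x / Gamma (x+1)) powr (1/x)"
    by (simp add: Ball_Volume.unit_ball_vol_def x_def)
  also have "\<dots> = pi / Gamma (x+1) powr (1/x)"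
    using x Gp by (simp add: powr_divide powr_powr)
  finally have e: "Ball_Volume.unit_ball_vol (real N) powr (2 / real N) = pi / Gamma (x+1) powr (1/x)" .
  have "pi / Gamma (x+1) powr (1/x) < pi / (x * exp (-1))"
  proof (intro divide_strict_left_mono gl)
    have "0 < Gamma (x+1) powr (1/x)" using Gp by simp
    then show "0 < Gamma (x+1) powr (1/x) * (x * exp (-1))" using x by simp
  qed simp
  then have "real N * (pi / Gamma (x+1) powr (1/x)) < real N * (pi / (x * exp (-1)))"
    using N by (intro mult_strict_left_mono) auto
  also have "real N * (pi / (x * exp (-1))) = 2 * pi * exp 1"
    using x by (simp add: x_def exp_minus field_simps)
  finally show ?thesis using e by simp
qed




lemma layer_lower:
  fixes A :: "(real ^ 'n::finite) set" and \<rho> :: real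
  defines "Vn \<equiv> Ball_Volume.unit_ball_vol (real CARD('n))"
  defines "N \<equiv> CARD('n)"
  assumes A: "A \<in> sets lborel" "emeasure lborel A < \<infinity>" and \<rho>: "\<rho> \<ge> 0"
     and le: "Vn * \<rho> ^ N \<le> measure lborel A"
  shows "ennreal (measure lborel A * \<rho>^2 - 2 * Vn * \<rho>^(N+2) / (real N+2))
           \<le> (\<integral>\<^sup>+x. indicator A x * ennreal (norm x ^ 2) \<partial>lborel)"
proof -
  define m where "m = measure lborel A"
  have Am: "emeasure lborel A = ennreal m" using A unfolding m_def by (simp add: emeasure_eq_ennreal_measure)
  have Vn0: "Vn > 0" unfolding Vn_def by simp
  have ball: "emeasure lborel (ball (0::real^'n) s) = ennreal (Vn * s ^ N)" if "s \<ge> 0" for s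
    using emeasure_ball[OF that, of "0::real^'n"] by (simp add: Vn_def N_def)
  have inner: "ennreal (norm x ^2) = (\<integral>\<^sup>+s. ennreal (2 * s) * indicator {0..norm x} s \<partial>lborel)" for x :: "real^'n"
  proof -
    have "((\<lambda>s. 2 * s) has_integral ((\<lambda>s. s^2) (norm x) - (\<lambda>s. s^2) 0)) {0..norm x}"
      by (intro fundamental_theorem_of_calculus)
         (auto simp: has_real_derivative_iff_has_vector_derivative[symmetric] intro!: derivative_eq_intros)
    then have "((\<lambda>s. 2 * s) has_integral (norm x ^2)) {0..norm x}" by simp
    from nn_integral_has_integral_lebesgue'[OF _ this] show ?thesis by simp
  qed
  define h where "h = (\<lambda>(x::real^'n) (s::real). indicator A x * ennreal (2 * s) * (if 0 \<le> s \<and> s \<le> norm x then 1 else 0))"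
  have hm: "case_prod h \<in> borel_measurable (lborel \<Otimes>\<^sub>M lborel)"
    unfolding h_def using A(1) by measurable
  have "(\<integral>\<^sup>+x. indicator A x * ennreal (norm x ^ 2) \<partial>lborel) = (\<integral>\<^sup>+x. (\<integral>\<^sup>+s. h x s \<partial>lborel) \<partial>lborel)"
  proof (rule nn_integral_cong)
    fix x :: "real^'n"
    have "indicator A x * ennreal (norm x ^ 2) = indicator A x * (\<integral>\<^sup>+s. ennreal (2 * s) * indicator {0..norm x} s \<partial>lborel)"
      by (simp add: inner[symmetric])
    also have "\<dots> = (\<integral>\<^sup>+s. indicator A x * (ennreal (2 * s) * indicator {0..norm x} s) \<partial>lborel)"
      by (rule nn_integral_cmult[symmetric]) measurable
    also have "\<dots> = (\<integral>\<^sup>+s. h x s \<partial>lborel)"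
      by (rule nn_integral_cong) (simp add: h_def indicator_def mult.assoc)
    finally show "indicator A x * ennreal (norm x ^ 2) = (\<integral>\<^sup>+s. h x s \<partial>lborel)" .
  qed
  also have "\<dots> = (\<integral>\<^sup>+s. (\<integral>\<^sup>+x. h x s \<partial>lborel) \<partial>lborel)"
    by (rule lborel_pair.Fubini'[symmetric, OF hm])
  also have "\<dots> = (\<integral>\<^sup>+s. ennreal (2 * s) * indicator {0..} s * emeasure lborel (A \<inter> {x. s \<le> norm x}) \<partial>lborel)"
  proof (rule nn_integral_cong)
    fix s :: real
    have "(\<integral>\<^sup>+x. h x s \<partial>lborel) = (\<integral>\<^sup>+x. (ennreal (2 * s) * indicator {0..} s) * indicator (A \<inter> {x. s \<le> norm x}) x \<partial>lborel)"
      by (rule nn_integral_cong) (auto simp: h_def indicator_def)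
    also have "\<dots> = ennreal (2 * s) * indicator {0..} s * emeasure lborel (A \<inter> {x. s \<le> norm x})"
      by (rule nn_integral_cmult_indicator) (use A(1) in measurable)
    finally show "(\<integral>\<^sup>+x. h x s \<partial>lborel) = ennreal (2 * s) * indicator {0..} s * emeasure lborel (A \<inter> {x. s \<le> norm x})" .
  qed
  also have "\<dots> \<ge> (\<integral>\<^sup>+s. ennreal (2 * s*(m - Vn * s^N)) * indicator {0..\<rho>} s \<partial>lborel)"
  proof (rule nn_integral_mono)
    fix s :: real
    show "ennreal (2 * s*(m - Vn * s^N)) * indicator {0..\<rho>} s \<le> ennreal (2 * s) * indicator {0..} s * emeasure lborel (A \<inter> {x. s \<le> norm x})"
    proof (cases "s \<in> {0..\<rho>}")
      case False then show ?thesis by simp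
    next
      case True
      then have s0: "s \<ge> 0" "s \<le> \<rho>" by auto
      have "s ^ N \<le> \<rho> ^ N" using s0 by (intro power_mono) auto
      then have mv: "m - Vn * s^N \<ge> 0" using le Vn0 unfolding m_def
        by (smt (verit) mult_left_mono)
      have sub: "A \<subseteq> (A \<inter> {x. s \<le> norm x}) \<union> ball 0 s" by (auto simp: dist_norm)
      have "ennreal m \<le> emeasure lborel ((A \<inter> {x. s \<le> norm x}) \<union> ball 0 s)"
        unfolding Am[symmetric] by (rule emeasure_mono[OF sub]) (use A(1) in measurable)
      also have "\<dots> \<le> emeasure lborel (A \<inter> {x. s \<le> norm x}) + emeasure lborel (ball (0::real^'n) s)"
        by (rule emeasure_subadditive) (use A(1) in measurable)
      finally have "ennreal m \<le> emeasure lborel (A \<inter> {x. s \<le> norm x}) + ennreal (Vn * s ^ N)"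
        using ball[OF s0(1)] by simp
      then have em: "ennreal (m - Vn * s^N) \<le> emeasure lborel (A \<inter> {x. s \<le> norm x})"
        using Vn0 s0 by (subst ennreal_minus[symmetric]) (auto simp: ennreal_minus_le_iff add.commute)
      have "ennreal (2 * s*(m - Vn * s^N)) * indicator {0..\<rho>} s = ennreal (2 * s) * ennreal (m - Vn * s^N)"
        using True s0 mv by (simp add: ennreal_mult)
      also have "\<dots> \<le> ennreal (2 * s) * emeasure lborel (A \<inter> {x. s \<le> norm x})"
        by (rule mult_left_mono[OF em]) simp
      also have "\<dots> = ennreal (2 * s) * indicator {0..} s * emeasure lborel (A \<inter> {x. s \<le> norm x})"
        using s0 by simp
      finally show ?thesis .
    qed
  qed
  also have "(\<integral>\<^sup>+s. ennreal (2 * s*(m - Vn * s^N)) * indicator {0..\<rho>} s \<partial>lborel)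
      = ennreal ((\<lambda>s. m * s^2 - 2 * Vn * s^(N+2) / (real N+2)) \<rho> - (\<lambda>s. m * s^2 - 2 * Vn * s^(N+2) / (real N+2)) 0)"
  proof (rule nn_integral_has_integral_lebesgue')
    show "\<And>x. x \<in> {0..\<rho>} \<Longrightarrow> 0 \<le> 2 * x * (m - Vn * x ^ N)"
    proof -
      fix x assume x: "x \<in> {0..\<rho>}"
      have "x ^ N \<le> \<rho> ^ N" using x by (intro power_mono) auto
      then have "m - Vn * x^N \<ge> 0" using le Vn0 unfolding m_def by (smt (verit) mult_left_mono)
      then show "0 \<le> 2 * x * (m - Vn * x ^ N)" using x by simp
    qed
    show "((\<lambda>s. 2 * s*(m - Vn * s^N)) has_integral
        ((\<lambda>s. m * s^2 - 2 * Vn * s^(N+2) / (real N+2)) \<rho> - (\<lambda>s. m * s^2 - 2 * Vn * s^(N+2) / (real N+2)) 0)) {0..\<rho>}"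
    proof (intro fundamental_theorem_of_calculus ballI \<rho>)
      fix x assume "x \<in> {0..\<rho>}"
      have "((\<lambda>s. m * s^2 - 2 * Vn * s^(N+2) / (real N+2)) has_real_derivative (2 * x*(m - Vn * x^N))) (at x)"
      proof -
        have d1: "((\<lambda>s. s^(N+2)) has_real_derivative (real N + 2) * x^(N+1)) (at x)"
          using DERIV_pow[of "N+2" x, where s=UNIV] by (simp add: add.commute)
        have d2: "((\<lambda>s. s^2) has_real_derivative 2 * x) (at x)"
          using DERIV_pow[of 2 x] by simp
        have "((\<lambda>s. m * s^2 - 2 * Vn * s^(N+2) / (real N+2)) has_real_derivative
            (m * (2 * x) - 2 * Vn * ((real N + 2) * x^(N+1)) / (real N+2))) (at x)"
          by (rule DERIV_diff[OF DERIV_cmult[OF d2] DERIV_cdivide[OF DERIV_cmult[OF d1]]])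
        moreover have "m * (2 * x) - 2 * Vn * ((real N + 2) * x^(N+1)) / (real N+2) = 2 * x * (m - Vn * x^N)"
          by (simp add: field_simps)
        ultimately show ?thesis by simp
      qed
      then show "((\<lambda>s. m * s^2 - 2 * Vn * s^(N+2) / (real N+2)) has_vector_derivative (2 * x*(m - Vn * x^N))) (at x within {0..\<rho>})"
        by (simp add: has_real_derivative_iff_has_vector_derivative[symmetric] has_field_derivative_at_within)
    qed
  qed
  finally show ?thesis by (simp add: m_def)
qed




lemma leb_lower:
  fixes A :: "(real ^ 'n::finite) set" and \<rho> :: real
  assumes A: "A \<in> sets lebesgue" "emeasure lebesgue A < \<infinity>"
    and int: "set_integrable lebesgue A (\<lambda>x. norm x ^ 2)" and \<rho>: "\<rho> \<ge> 0"
    and eq: "Ball_Volume.unit_ball_vol (real CARD('n)) * \<rho> ^ CARD('n) = measure lebesgue A"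
  shows "measure lebesgue A * \<rho>^2 * (real CARD('n) / (real CARD('n) + 2)) \<le> (LINT x:A|lebesgue. norm x ^ 2)"
proof -
  define B where "B = main_part lborel A"
  define Vn where "Vn = Ball_Volume.unit_ball_vol (real CARD('n))"
  define N where "N = CARD('n)"
  define m where "m = measure lebesgue A"
  have B: "B \<in> sets lborel" unfolding B_def by (rule main_part_sets[OF A(1)])
  have eB: "emeasure lborel B = emeasure lebesgue A" unfolding B_def using A(1) by simp
  then have mB: "measure lborel B = m" unfolding m_def measure_def by simp
  have Bfin: "emeasure lborel B < \<infinity>" using eB A(2) by simp
  have "ennreal (measure lborel B * \<rho>^2 - 2 * Vn * \<rho>^(N+2) / (real N+2))
           \<le> (\<integral>\<^sup>+x. indicator B x * ennreal (norm x ^ 2) \<partial>lborel)"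
    unfolding Vn_def N_def by (rule layer_lower[OF B Bfin \<rho>]) (use eq mB m_def in simp)
  also have "\<dots> = (\<integral>\<^sup>+x. indicator A x * ennreal (norm x ^ 2) \<partial>lborel)"
  proof (rule nn_integral_cong_AE)
    show "AE x in lborel. indicator B x * ennreal (norm x ^ 2) = indicator A x * ennreal (norm x ^ 2)"
      using AE_in_main_part[OF A(1)] unfolding B_def by eventually_elim (simp add: indicator_def)
  qed
  also have "\<dots> = (\<integral>\<^sup>+x. indicator A x * ennreal (norm x ^ 2) \<partial>lebesgue)"
    by (rule nn_integral_completion[symmetric])
  also have "\<dots> = (\<integral>\<^sup>+x. ennreal (indicator A x *\<^sub>R (norm x ^ 2)) \<partial>lebesgue)"
    by (rule nn_integral_cong) (simp add: indicator_def)
  also have "\<dots> = ennreal (LINT x:A|lebesgue. norm x ^ 2)"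
    unfolding set_lebesgue_integral_def
    by (rule nn_integral_eq_integral) (use int in \<open>auto simp: set_integrable_def\<close>)
  finally have 1: "ennreal (m * \<rho>^2 - 2 * Vn * \<rho>^(N+2) / (real N+2)) \<le> ennreal (LINT x:A|lebesgue. norm x ^ 2)"
    using mB by simp
  have I0: "0 \<le> (LINT x:A|lebesgue. norm x ^ 2)"
    unfolding set_lebesgue_integral_def by (rule integral_nonneg_AE) (simp add: indicator_def)
  have 2: "m * \<rho>^2 - 2 * Vn * \<rho>^(N+2) / (real N+2) = m * \<rho>^2 * (real N / (real N + 2))"
  proof -
    have "Vn * \<rho>^(N+2) = (Vn * \<rho>^N) * \<rho>^2" by (simp add: power_add power2_eq_square)
    also have "\<dots> = m * \<rho>^2" using eq unfolding Vn_def N_def m_def by simp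
    finally have "Vn * \<rho>^(N+2) = m * \<rho>^2" .
    then show ?thesis by (simp add: field_simps)
  qed
  from 1 I0 have "m * \<rho>^2 - 2 * Vn * \<rho>^(N+2) / (real N+2) \<le> (LINT x:A|lebesgue. norm x ^ 2)"
    by (simp add: ennreal_le_iff)
  then show ?thesis using 2 unfolding m_def N_def by simp
qed




lemma ubv_eq: "Defs.unit_ball_vol TYPE('n::finite) = Ball_Volume.unit_ball_vol (real CARD('n))"
proof -
  have "Defs.unit_ball_vol TYPE('n) = measure lborel (ball (0::real^'n) 1)"
    unfolding Defs.unit_ball_vol_def by (simp add: measure_completion)
  also have "\<dots> = Ball_Volume.unit_ball_vol (real CARD('n))"
    using emeasure_ball[of 1 "0::real^'n"] by (simp add: measure_def)
  finally show ?thesis .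
qed

theorem lemma4:
  fixes S :: "(real ^ 'n::finite) set" and \<epsilon> :: real
  assumes "S \<in> sets lebesgue"
    and "emeasure lebesgue S < \<infinity>" and "0 < measure lebesgue S"
    and "set_integrable lebesgue S (\<lambda>x. (norm x)^2)"
    and "0 < \<epsilon>" and "\<epsilon> < 1"
  shows "measure (uniform_measure lebesgue S) (- cball 0 (r_eps S \<epsilon>)) \<le> \<epsilon>"
proof -
  note Sm = assms(1) and Sfin = assms(2) and Vpos = assms(3) and Sint = assms(4)
    and e0 = assms(5) and e1 = assms(6)
  define N where "N = CARD('n)"
  define n where "n = real N"
  have N1: "N \<ge> 1" unfolding N_def by (simp add: Suc_le_eq)
  have n1: "n \<ge> 1" using N1 unfolding n_def by simp
  define Vn where "Vn = Ball_Volume.unit_ball_vol n"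
  have Vn0: "Vn > 0" unfolding Vn_def using n1 by simp
  define V where "V = measure lebesgue S"
  have V0: "V > 0" using Vpos unfolding V_def .
  have eS: "emeasure lebesgue S = ennreal V" unfolding V_def using Sfin by (simp add: emeasure_eq_ennreal_measure)
  define I where "I = (LINT x:S|lebesgue. norm x ^ 2)"
  define G where "G = nsm S"
  have Gdef: "G = (1 / (n * V)) * I / (V powr (2 / n))"
    unfolding G_def nsm_def Let_def I_def V_def n_def N_def by simp
  define re where "re = r_eff S"
  have redef: "re = (V / Vn) powr (1 / n)"
    unfolding re_def r_eff_def ubv_eq V_def Vn_def n_def N_def by simp
  have re0: "re > 0" unfolding redef using V0 Vn0 by simp
  have re2: "re^2 = (V / Vn) powr (2 / n)"
    unfolding redef by (simp add: power2_eq_square powr_add[symmetric])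
  have Vpow: "V powr (2 / n) = Vn powr (2 / n) * re^2"
    unfolding re2 using V0 Vn0 by (simp add: powr_divide)
  define Q where "Q = n * Vn powr (2 / n) * G"
  have Ieq: "I = Q * V * re^2"
    unfolding Q_def Gdef using V0 n1 Vpow re0 Vn0 by (simp add: field_simps)
  define c where "c = n / (n + 2)"
  have c0: "c > 0" unfolding c_def using n1 by simp
  have reN: "Vn * re ^ N = V"
  proof -
    have "re ^ N = (V / Vn) powr (real N * (1 / n))"
      unfolding redef using V0 Vn0 by (simp add: powr_power)
    also have "\<dots> = V / Vn" using n1 V0 Vn0 unfolding n_def by simp
    finally show ?thesis using Vn0 by simp
  qed
  have "V * re^2 * c \<le> I"
    unfolding I_def V_def c_def n_def N_def
    by (rule leb_lower[OF Sm Sfin Sint]) (use re0 reN in \<open>auto simp: Vn_def V_def n_def N_def\<close>)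
  then have "c * (V * re^2) \<le> Q * (V * re^2)" unfolding Ieq by (simp add: algebra_simps)
  then have Qc: "c \<le> Q" using V0 re0 by simp
  have "0 < n * Vn powr (2 / n)" using n1 Vn0 by simp
  moreover have "0 < n * Vn powr (2 / n) * G" using Qc c0 unfolding Q_def by linarith
  ultimately have G0: "G > 0" by (metis zero_less_mult_pos)
  define K where "K = 2 * pi * exp 1 * G"
  have "n * Vn powr (2 / n) < 2 * pi * exp 1"
    using ubv_bound[OF N1] unfolding n_def Vn_def by simp
  then have QK: "Q < K" unfolding Q_def K_def using G0 by simp
  define a where "a = 1 + 2 / n"
  have a1: "a \<ge> 1" unfolding a_def using n1 by simp
  define D where "D = K - c * (1 - \<epsilon>) powr a"
  have "(1 - \<epsilon>) powr a \<le> 1" using e0 e1 a1 by (intro powr_le1) auto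
  then have Dc: "D \<ge> K - c" unfolding D_def using c0 by (simp add: mult_left_le)
  have D0: "D > 0" using Dc QK Qc by simp
  define r where "r = r_eps S \<epsilon>"
  have rdef: "r = sqrt (D / \<epsilon>) * re"
    unfolding r_def r_eps_def Let_def D_def K_def G_def c_def a_def re_def n_def N_def by simp
  have r0: "r \<ge> 0" unfolding rdef using D0 e0 re0 by simp
  have r2: "r^2 = D / \<epsilon> * re^2" unfolding rdef using D0 e0 by (simp add: power_mult_distrib)
  define C where "C = cball (0::real^'n) r"
  have Cm: "C \<in> sets lebesgue" unfolding C_def by simp
  have nCm: "- C \<in> sets lebesgue" unfolding C_def by simp
  define m1 where "m1 = measure lebesgue (S \<inter> C)"
  define m2 where "m2 = measure lebesgue (S \<inter> - C)"
  have fin1: "emeasure lebesgue (S \<inter> C) < \<infinity>"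
    using Sfin emeasure_mono[of "S \<inter> C" S lebesgue] Sm by (simp add: le_less_trans)
  have fin2: "emeasure lebesgue (S \<inter> - C) < \<infinity>"
    using Sfin emeasure_mono[of "S \<inter> - C" S lebesgue] Sm by (simp add: le_less_trans)
  have msum: "m1 + m2 = V"
  proof -
    have "S = (S \<inter> C) \<union> (S \<inter> - C)" by auto
    then have "V = measure lebesgue ((S \<inter> C) \<union> (S \<inter> - C))" unfolding V_def by simp
    also have "\<dots> = m1 + m2" unfolding m1_def m2_def
      using fin1 fin2 Sm Cm nCm by (intro measure_Union) auto
    finally show ?thesis by simp
  qed
  define p where "p = measure (uniform_measure lebesgue S) (- C)"
  have pdef: "p = m2 / V"
  proof -
    have "emeasure (uniform_measure lebesgue S) (- C) = emeasure lebesgue (S \<inter> - C) / emeasure lebesgue S"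
      using Sm nCm by simp
    also have "\<dots> = ennreal (m2 / V)"
      unfolding eS m2_def using fin2 V0 by (simp add: emeasure_eq_ennreal_measure divide_ennreal)
    finally show ?thesis unfolding p_def measure_def using V0 by (simp add: m2_def)
  qed
  have m1p: "m1 = (1 - p) * V" using msum pdef V0 by (simp add: field_simps)
  have m2p: "m2 = p * V" using pdef V0 by simp
  have m1_0: "m1 \<ge> 0" "m2 \<ge> 0" unfolding m1_def m2_def by auto
  have p1: "p \<le> 1" using m1p m1_0 V0 by (simp add: zero_le_mult_iff)
  show ?thesis unfolding p_def[symmetric] C_def[symmetric] r_def[symmetric]
  proof (rule ccontr)
    assume "\<not> p \<le> \<epsilon>"
    then have pe: "p > \<epsilon>" by simp
    have int1: "set_integrable lebesgue (S \<inter> C) (\<lambda>x. norm x ^ 2)"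
      by (rule set_integrable_subset[OF Sint]) (use Sm Cm in auto)
    have int2: "set_integrable lebesgue (S \<inter> - C) (\<lambda>x. norm x ^ 2)"
      by (rule set_integrable_subset[OF Sint]) (use Sm nCm in auto)
    have Isplit: "I = (LINT x:(S \<inter> C)|lebesgue. norm x ^ 2) + (LINT x:(S \<inter> - C)|lebesgue. norm x ^ 2)"
    proof -
      have "S = (S \<inter> C) \<union> (S \<inter> - C)" by auto
      then have "I = (LINT x:(S \<inter> C) \<union> (S \<inter> - C)|lebesgue. norm x ^ 2)" unfolding I_def by simp
      also have "\<dots> = (LINT x:(S \<inter> C)|lebesgue. norm x ^ 2) + (LINT x:(S \<inter> - C)|lebesgue. norm x ^ 2)"
        by (rule set_integral_Un[OF _ int1 int2]) auto
      finally show ?thesis .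
    qed
    have I2: "r^2 * m2 \<le> (LINT x:(S \<inter> - C)|lebesgue. norm x ^ 2)"
    proof -
      have ci: "set_integrable lebesgue (S \<inter> - C) (\<lambda>_. r^2)"
        unfolding set_integrable_def
        by (intro integrable_scaleR_left) (use fin2 Sm nCm in \<open>simp add: integrable_indicator_iff\<close>)
      have "(LINT x:(S \<inter> - C)|lebesgue. r^2) \<le> (LINT x:(S \<inter> - C)|lebesgue. norm x ^ 2)"
      proof (rule set_integral_mono[OF ci int2])
        fix x assume "x \<in> S \<inter> - C"
        then have "r \<le> norm x" unfolding C_def by (simp add: dist_norm)
        then show "r^2 \<le> norm x ^ 2" using r0 by (intro power_mono) auto
      qed
      moreover have "(LINT x:(S \<inter> - C)|lebesgue. r^2) = m2 * r^2"
        unfolding m2_def using fin2 Sm nCm by (subst set_integral_const) auto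
      ultimately show ?thesis by (simp add: mult.commute)
    qed
    define \<rho> where "\<rho> = root N (m1 / Vn)"
    have \<rho>0: "\<rho> \<ge> 0" unfolding \<rho>_def using m1_0 Vn0 by (intro real_root_ge_zero) simp
    have \<rho>N: "Vn * \<rho> ^ N = m1" unfolding \<rho>_def using N1 m1_0 Vn0 by simp
    have I1: "m1 * \<rho>^2 * c \<le> (LINT x:(S \<inter> C)|lebesgue. norm x ^ 2)"
      unfolding m1_def c_def n_def N_def
      by (rule leb_lower[OF _ fin1 int1 \<rho>0]) (use Sm Cm \<rho>N in \<open>auto simp: m1_def Vn_def n_def N_def\<close>)
    have \<rho>2: "m1 * \<rho>^2 = (1 - p) powr a * V * re^2"
    proof (cases "p = 1")
      case True
      then have "m1 = 0" using m1p by simp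
      then show ?thesis using True a1 by simp
    next
      case False
      then have p1': "1 - p > 0" using p1 by simp
      have "\<rho> = (m1 / Vn) powr (1 / n)"
        unfolding \<rho>_def n_def using N1 m1_0 Vn0 by (simp add: root_powr_inverse)
      also have "\<dots> = (1 - p) powr (1 / n) * re"
        unfolding redef m1p using p1' V0 Vn0 by (simp add: powr_mult[symmetric] mult.assoc)
      finally have "\<rho>^2 = (1 - p) powr (2 / n) * re^2"
        using p1' by (simp add: power_mult_distrib power2_eq_square powr_add[symmetric])
      then have "m1 * \<rho>^2 = ((1 - p) * (1 - p) powr (2 / n)) * V * re^2"
        unfolding m1p by simp
      also have "(1 - p) * (1 - p) powr (2 / n) = (1 - p) powr a"
        unfolding a_def using p1' by (simp add: powr_add)
      finally show ?thesis .
    qed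
    define y where "y = (1 - p) powr a"
    define z where "z = (1 - \<epsilon>) powr a"
    have "I \<ge> V * re^2 * (c * y + p * (D / \<epsilon>))"
    proof -
      have "V * re^2 * (c * y + p * (D / \<epsilon>)) = m1 * \<rho>^2 * c + r^2 * m2"
        unfolding \<rho>2 r2 m2p y_def by (simp add: algebra_simps)
      then show ?thesis using I1 I2 Isplit by simp
    qed
    moreover have "I < V * re^2 * K" unfolding Ieq using QK V0 re0 by simp
    ultimately have "V * re^2 * (c * y + p * (D / \<epsilon>)) < V * re^2 * K" by linarith
    then have phi: "c * y + p * (D / \<epsilon>) < K"
    proof -
      have pos: "0 < V * re^2" using V0 re0 by simp
      show ?thesis using pos mult_less_cancel_left_pos \<open>V * re^2 * (c * y + p * (D / \<epsilon>)) < V * re^2 * K\<close> by blast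
    qed
    define l where "l = \<epsilon> / p"
    have l01: "0 < l" "l < 1" unfolding l_def using e0 pe by auto
    have conv: "z \<le> (1 - l) + l * y"
    proof (cases "p = 1")
      case True
      then have "y = 0" unfolding y_def using a1 by simp
      moreover have "z \<le> (1 - \<epsilon>) powr 1" unfolding z_def using a1 e0 e1 by (intro powr_mono') auto
      ultimately show ?thesis using True e1 unfolding l_def by simp
    next
      case False
      then have p1': "1 - p > 0" using p1 by simp
      have e: "(1 - l) *\<^sub>R 1 + l *\<^sub>R (1 - p) = 1 - \<epsilon>" unfolding l_def using pe e0 by (simp add: field_simps)
      have "(\<lambda>x. x powr a) ((1 - l) *\<^sub>R 1 + l *\<^sub>R (1 - p)) \<le> (1 - l) * (\<lambda>x. x powr a) 1 + l * (\<lambda>x. x powr a) (1 - p)"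
        by (rule convex_onD[OF powr_convex[OF a1]]) (use l01 p1' in auto)
      then show ?thesis unfolding e z_def y_def by simp
    qed
    have Deq: "D = K - c * z" unfolding D_def z_def ..
    have "(p / \<epsilon>) * c * z \<le> (p / \<epsilon>) * c * ((1 - l) + l * y)"
      using conv e0 pe c0 by (intro mult_left_mono) auto
    also have "(p / \<epsilon>) * c * ((1 - l) + l * y) = c * (p / \<epsilon> - 1) + c * y"
      unfolding l_def using e0 pe by (simp add: field_simps)
    finally have h1: "(p / \<epsilon>) * c * z \<le> c * (p / \<epsilon> - 1) + c * y" .
    have h2: "p * (D / \<epsilon>) = (p / \<epsilon>) * K - (p / \<epsilon>) * c * z" unfolding Deq using e0 by (simp add: field_simps)
    have h3: "(p / \<epsilon> - 1) * (K - c) \<ge> 0" using pe e0 QK Qc by simp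
    have h4: "(p / \<epsilon>) * K - c * (p / \<epsilon> - 1) = K + (p / \<epsilon> - 1) * (K - c)" using e0 by (simp add: field_simps)
    show False using phi h1 h2 h3 h4 by linarith
  qed
qed


end
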